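(* Let $G$ be a graph with no massive edges and let $X=\{x_1,x_2,x_3,x_4\}\subseteq V(G)$ be the set of vertices with external momenta, all of them on-shell. Suppose $G$ has a $1$-separation $(A,B)$ with $A\cap B=\{v\}$, with $x_1,x_2,x_3\in A\setminus\{v\}$ and $x_4\in B\setminus\{v\}$. Give $G[A]$ the same external momenta and Schwinger parameters as $A$ has in $G$, except that the momentum at $v$ is set to $\rho_{x_4}$. Then $\phi_G=\phi_{G[A]}\psi_{G[B]}$.
   Context: A $1$-separation is a pair $(A,B)$ with $A\cup B=V(G)$, $|A\cap B|\le1$ and no edge between $A\setminus B$ and $B\setminus A$. Each edge $e$ has a variable $\alpha_e$ and a mass $m_e$ (massive if $m_e\neq0$); each vertex $u$ has $\rho_u\in\mathbb{R}^4$, zero outside $X$, with $\sum_u\rho_u=0$. $\rho^2=\rho_1^2+\rho_2^2+\rho_3^2-\rho_4^2$ and $\rho_u$ is on-shell if $\rho_u^2=0$. $\psi_G=\sum_T\prod_{e\notin E(T)}\alpha_e$ over spanning trees $T$. A spanning 2-forest is an unordered pair $(T_1,T_2)$ of vertex-disjoint trees covering $V(G)$; $\rho^{H}=\sum_{u\in V(H)}\rho_u$; $\phi_G=\sum_{(T_1,T_2)}(\rho^{T_1})^2\prod_{e\notin E(T_1)\cup E(T_2)}\alpha_e+\psi_G\sum_e\alpha_em_e^2$. *)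

theory Defs
  imports "HOL-Analysis.Analysis"
begin

definition graph :: "'v set \<Rightarrow> 'e set \<Rightarrow> ('e \<Rightarrow> 'v \<times> 'v) \<Rightarrow> bool" where
  "graph V E ends \<longleftrightarrow> finite V \<and> finite E \<and>
     (\<forall>e\<in>E. fst (ends e) \<in> V \<and> snd (ends e) \<in> V \<and> fst (ends e) \<noteq> snd (ends e))"

text \<open>Edges of E with both endpoints in S (edge set of the induced subgraph G[S]).\<close>
definition edges_in :: "'e set \<Rightarrow> ('e \<Rightarrow> 'v \<times> 'v) \<Rightarrow> 'v set \<Rightarrow> 'e set" where
  "edges_in E ends S = {e\<in>E. fst (ends e) \<in> S \<and> snd (ends e) \<in> S}"

definition edge_rel :: "'e set \<Rightarrow> ('e \<Rightarrow> 'v \<times> 'v) \<Rightarrow> ('v \<times> 'v) set" where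
  "edge_rel F ends = {(a, b). \<exists>e\<in>F. ends e = (a, b) \<or> ends e = (b, a)}"

definition is_tree :: "'v set \<Rightarrow> 'e set \<Rightarrow> ('e \<Rightarrow> 'v \<times> 'v) \<Rightarrow> bool" where
  "is_tree S F ends \<longleftrightarrow> finite S \<and> finite F \<and>
     (\<forall>e\<in>F. fst (ends e) \<in> S \<and> snd (ends e) \<in> S) \<and>
     (\<forall>u\<in>S. \<forall>w\<in>S. (u, w) \<in> (edge_rel F ends)\<^sup>*) \<and>
     card F + 1 = card S"

definition spanning_trees :: "'v set \<Rightarrow> 'e set \<Rightarrow> ('e \<Rightarrow> 'v \<times> 'v) \<Rightarrow> 'e set set" where
  "spanning_trees V E ends = {T. T \<subseteq> E \<and> is_tree V T ends}"

text \<open>Spanning 2-forests, each unordered pair (T1,T2) represented twice, as the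
ordered pairs (V(T1), E(T1) \<union> E(T2)) and (V(T2), E(T1) \<union> E(T2)).\<close>
definition spanning_2forests :: "'v set \<Rightarrow> 'e set \<Rightarrow> ('e \<Rightarrow> 'v \<times> 'v) \<Rightarrow> ('v set \<times> 'e set) set" where
  "spanning_2forests V E ends = {(S, F). S \<subseteq> V \<and> F \<subseteq> E \<and>
      (\<exists>F1 F2. F = F1 \<union> F2 \<and> is_tree S F1 ends \<and> is_tree (V - S) F2 ends)}"

definition psi :: "'v set \<Rightarrow> 'e set \<Rightarrow> ('e \<Rightarrow> 'v \<times> 'v) \<Rightarrow> ('e \<Rightarrow> real) \<Rightarrow> real" where
  "psi V E ends \<alpha> = (\<Sum>T\<in>spanning_trees V E ends. \<Prod>e\<in>E - T. \<alpha> e)"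

definition mink_sq :: "real^4 \<Rightarrow> real" where
  "mink_sq p = (p$1)^2 + (p$2)^2 + (p$3)^2 - (p$4)^2"

text \<open>The sum over unordered pairs (T1,T2) equals half the sum over ordered representatives.\<close>
definition phi :: "'v set \<Rightarrow> 'e set \<Rightarrow> ('e \<Rightarrow> 'v \<times> 'v) \<Rightarrow> ('e \<Rightarrow> real) \<Rightarrow> ('e \<Rightarrow> real)
                    \<Rightarrow> ('v \<Rightarrow> real^4) \<Rightarrow> real" where
  "phi V E ends \<alpha> m \<rho> =
     (1/2) * (\<Sum>(S, F)\<in>spanning_2forests V E ends. mink_sq (\<Sum>u\<in>S. \<rho> u) * (\<Prod>e\<in>E - F. \<alpha> e))
     + psi V E ends \<alpha> * (\<Sum>e\<in>E. \<alpha> e * (m e)^2)"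

end

theory Submission
  imports Defs
begin


lemma edge_rel_insert:
  "edge_rel (insert e F) ends = edge_rel F ends \<union> {(fst (ends e), snd (ends e)), (snd (ends e), fst (ends e))}"
  unfolding edge_rel_def by (cases "ends e") auto

lemma edge_rel_mono: "F \<subseteq> F' \<Longrightarrow> edge_rel F ends \<subseteq> edge_rel F' ends"
  unfolding edge_rel_def by auto

lemma edge_rel_empty: "edge_rel {} ends = {}"
  unfolding edge_rel_def by auto

lemma reach_mono:
  assumes "F \<subseteq> F'" "(x,y) \<in> (edge_rel F ends)\<^sup>*"
  shows "(x,y) \<in> (edge_rel F' ends)\<^sup>*"
  by (rule subsetD[OF rtrancl_mono[OF edge_rel_mono[OF assms(1)]] assms(2)])

lemma sym_edge_rel: "sym (edge_rel F ends)"
  unfolding sym_def edge_rel_def by auto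

lemma reach_sym: "(x,y) \<in> (edge_rel F ends)\<^sup>* \<Longrightarrow> (y,x) \<in> (edge_rel F ends)\<^sup>*"
  by (rule symD[OF sym_rtrancl[OF sym_edge_rel]])

lemma reach_class_eq: "(x,y) \<in> (edge_rel F ends)\<^sup>* \<Longrightarrow> (edge_rel F ends)\<^sup>* `` {x} = (edge_rel F ends)\<^sup>* `` {y}"
proof -
  assume h: "(x,y) \<in> (edge_rel F ends)\<^sup>*"
  have h': "(y,x) \<in> (edge_rel F ends)\<^sup>*" using reach_sym h .
  show ?thesis using h h' by (auto intro: rtrancl_trans)
qed

lemma reach_closed:
  assumes "\<forall>e\<in>F. fst (ends e) \<in> S \<and> snd (ends e) \<in> S" "w \<in> S" "(w,y) \<in> (edge_rel F ends)\<^sup>*"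
  shows "y \<in> S"
  using assms(3)
proof (induction rule: rtrancl_induct)
  case base then show ?case using assms(2) .
next
  case (step y z)
  then obtain e where e: "e \<in> F" "ends e = (y,z) \<or> ends e = (z,y)" unfolding edge_rel_def by auto
  then show ?case using assms(1) by (metis fst_conv snd_conv)
qed

lemma comp_bound:
  assumes "finite F" "finite S"
  shows "(\<forall>e\<in>F. fst (ends e) \<in> S \<and> snd (ends e) \<in> S) \<Longrightarrow>
     card S \<le> card F + card ((\<lambda>w. (edge_rel F ends)\<^sup>* `` {w}) ` S)"
  using assms(1)
proof (induction F rule: finite_induct)
  case empty
  have "(\<lambda>w. (edge_rel {} ends)\<^sup>* `` {w}) ` S = (\<lambda>w. {w}) ` S"
    by (simp add: edge_rel_empty)
  moreover have "card ((\<lambda>w. {w}) ` S) = card S"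
    by (rule card_image) (auto simp: inj_on_def)
  ultimately show ?case by simp
next
  case (insert e F)
  define a where "a = fst (ends e)"
  define b where "b = snd (ends e)"
  define R where "R = (edge_rel F ends)\<^sup>*"
  define R' where "R' = (edge_rel (insert e F) ends)\<^sup>*"
  define C where "C = (\<lambda>w. R `` {w}) ` S"
  define C' where "C' = (\<lambda>w. R' `` {w}) ` S"
  have ab: "a \<in> S" "b \<in> S" using insert.prems unfolding a_def b_def by auto
  have "\<forall>e\<in>F. fst (ends e) \<in> S \<and> snd (ends e) \<in> S" using insert.prems by simp
  from insert.IH[OF this] have IH: "card S \<le> card F + card C" unfolding C_def R_def .
  have fC: "finite C" "finite C'" using assms(2) unfolding C_def C'_def by auto
  have sub: "C - {R``{a}, R``{b}} \<subseteq> C' - {R'``{a}}"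
  proof
    fix x assume x: "x \<in> C - {R``{a}, R``{b}}"
    then obtain w where w: "w \<in> S" "x = R``{w}" unfolding C_def by auto
    have na: "a \<notin> R``{w}"
    proof
      assume "a \<in> R``{w}"
      then have "(w, a) \<in> R" by auto
      then have "R``{w} = R``{a}" unfolding R_def by (rule reach_class_eq)
      then show False using x w by auto
    qed
    have nb: "b \<notin> R``{w}"
    proof
      assume "b \<in> R``{w}"
      then have "(w, b) \<in> R" by auto
      then have "R``{w} = R``{b}" unfolding R_def by (rule reach_class_eq)
      then show False using x w by auto
    qed
    have "R'``{w} \<subseteq> R``{w}"
    proof
      fix y assume "y \<in> R'``{w}"
      then have "(w,y) \<in> R'" by auto
      then show "y \<in> R``{w}" unfolding R'_def
      proof (induction rule: rtrancl_induct)
        case base then show ?case unfolding R_def by auto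
      next
        case (step y z)
        show ?case
        proof (cases "(y,z) \<in> edge_rel F ends")
          case True then show ?thesis using step.IH unfolding R_def
            by (auto intro: rtrancl_into_rtrancl)
        next
          case False
          then have "y = a \<or> y = b" using step.hyps(2) unfolding edge_rel_insert a_def b_def by (cases "ends e") auto
          then show ?thesis using step.IH na nb by auto
        qed
      qed
    qed
    moreover have "R``{w} \<subseteq> R'``{w}" unfolding R_def R'_def
      by (auto intro: reach_mono[OF subset_insertI])
    ultimately have eq: "R'``{w} = x" using w by auto
    have "a \<in> R'``{a}" unfolding R'_def by auto
    then have "x \<noteq> R'``{a}" using na w by auto
    then show "x \<in> C' - {R'``{a}}" using eq w unfolding C'_def by auto
  qed
  have "card (C - {R``{a}, R``{b}}) \<le> card (C' - {R'``{a}})"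
    using card_mono[OF _ sub] fC by auto
  moreover have "R'``{a} \<in> C'" using ab unfolding C'_def by auto
  moreover have "card C' - 1 = card (C' - {R'``{a}})"
    using card_Diff_singleton[of "R'``{a}" C'] \<open>R'``{a} \<in> C'\<close> by simp
  moreover have "card C' \<ge> 1" using \<open>R'``{a} \<in> C'\<close> fC(2) card_gt_0_iff[of C'] by auto
  ultimately have 1: "card (C - {R``{a}, R``{b}}) + 1 \<le> card C'" by linarith
  have "card C \<le> card ((C - {R``{a}, R``{b}}) \<union> {R``{a}, R``{b}})"
    by (rule card_mono) (use fC in auto)
  also have "\<dots> \<le> card (C - {R``{a}, R``{b}}) + card {R``{a}, R``{b}}"
    by (rule card_Un_le)
  finally have "card C \<le> card (C - {R``{a}, R``{b}}) + card {R``{a}, R``{b}}" .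
  moreover have "card {R``{a}, R``{b}} \<le> 2" by (simp add: card_insert_le_m1)
  ultimately have c1: "card C \<le> card C' + 1" using 1 by linarith
  have c2: "card (insert e F) = card F + 1" using insert.hyps by simp
  from IH c1 c2 have "card S \<le> card (insert e F) + card C'" by linarith
  then show ?case unfolding C'_def R'_def .
qed

lemma connected_card:
  assumes "finite F" "finite S" "\<forall>e\<in>F. fst (ends e) \<in> S \<and> snd (ends e) \<in> S"
    "\<forall>u\<in>S. \<forall>w\<in>S. (u, w) \<in> (edge_rel F ends)\<^sup>*"
  shows "card S \<le> card F + 1"
proof (cases "S = {}")
  case True then show ?thesis by simp
next
  case False
  then obtain u0 where u0: "u0 \<in> S" by auto
  have sub: "(\<lambda>w. (edge_rel F ends)\<^sup>* `` {w}) ` S \<subseteq> {(edge_rel F ends)\<^sup>* `` {u0}}"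
  proof
    fix x assume "x \<in> (\<lambda>w. (edge_rel F ends)\<^sup>* `` {w}) ` S"
    then obtain w where w: "w \<in> S" "x = (edge_rel F ends)\<^sup>* `` {w}" by auto
    then have "(u0, w) \<in> (edge_rel F ends)\<^sup>*" using assms(4) u0 by auto
    then have "(edge_rel F ends)\<^sup>* `` {u0} = (edge_rel F ends)\<^sup>* `` {w}" by (rule reach_class_eq)
    then show "x \<in> {(edge_rel F ends)\<^sup>* `` {u0}}" using w by simp
  qed
  have "card ((\<lambda>w. (edge_rel F ends)\<^sup>* `` {w}) ` S) \<le> card {(edge_rel F ends)\<^sup>* `` {u0}}"
    by (rule card_mono[OF _ sub]) simp
  then have "card ((\<lambda>w. (edge_rel F ends)\<^sup>* `` {w}) ` S) \<le> 1" by simp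
  then show ?thesis using comp_bound[OF assms(1,2) assms(3)] by linarith
qed




lemma proj_reach:
  assumes cap: "A' \<inter> B' = {v}"
    and sep: "\<forall>e\<in>F. (fst (ends e) \<in> A' \<and> snd (ends e) \<in> A') \<or> (fst (ends e) \<in> B' \<and> snd (ends e) \<in> B')"
    and r: "(x,y) \<in> (edge_rel F ends)\<^sup>*"
  shows "((if x \<in> A' then x else v), (if y \<in> A' then y else v))
          \<in> (edge_rel {e\<in>F. fst (ends e) \<in> A' \<and> snd (ends e) \<in> A'} ends)\<^sup>*"
  using r
proof (induction rule: rtrancl_induct)
  case base then show ?case by auto
next
  case (step y z)
  then obtain e where e: "e \<in> F" "ends e = (y,z) \<or> ends e = (z,y)" unfolding edge_rel_def by auto
  show ?case
  proof (cases "fst (ends e) \<in> A' \<and> snd (ends e) \<in> A'")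
    case True
    then have yz: "y \<in> A'" "z \<in> A'" using e(2) by auto
    have "(y,z) \<in> edge_rel {e\<in>F. fst (ends e) \<in> A' \<and> snd (ends e) \<in> A'} ends"
      unfolding edge_rel_def using e True by auto
    then show ?thesis using step.IH yz by (auto intro: rtrancl_into_rtrancl)
  next
    case False
    then have "fst (ends e) \<in> B' \<and> snd (ends e) \<in> B'" using sep e(1) by auto
    then have yz: "y \<in> B'" "z \<in> B'" using e(2) by auto
    have "(if y \<in> A' then y else v) = v" "(if z \<in> A' then z else v) = v"
      using yz cap by auto
    then show ?thesis using step.IH by simp
  qed
qed

lemma tree_split:
  assumes W: "A' \<union> B' = W" and cap: "A' \<inter> B' = {v}" and fW: "finite W" and fF: "finite F"
    and sep: "\<forall>e\<in>F. (fst (ends e) \<in> A' \<and> snd (ends e) \<in> A') \<or> (fst (ends e) \<in> B' \<and> snd (ends e) \<in> B')"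
    and loop: "\<forall>e\<in>F. fst (ends e) \<noteq> snd (ends e)"
  shows "is_tree W F ends \<longleftrightarrow>
     is_tree A' {e\<in>F. fst (ends e) \<in> A' \<and> snd (ends e) \<in> A'} ends \<and>
     is_tree B' {e\<in>F. fst (ends e) \<in> B' \<and> snd (ends e) \<in> B'} ends"
proof -
  define FA where "FA = {e\<in>F. fst (ends e) \<in> A' \<and> snd (ends e) \<in> A'}"
  define FB where "FB = {e\<in>F. fst (ends e) \<in> B' \<and> snd (ends e) \<in> B'}"
  have FU: "F = FA \<union> FB" using sep unfolding FA_def FB_def by auto
  have FI: "FA \<inter> FB = {}"
  proof (rule ccontr)
    assume "FA \<inter> FB \<noteq> {}"
    then obtain e where "e \<in> FA" "e \<in> FB" by auto
    then have "e \<in> F" "fst (ends e) = v" "snd (ends e) = v" using cap unfolding FA_def FB_def by auto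
    then show False using loop by auto
  qed
  have fA: "finite A'" "finite B'" using fW W by auto
  have fFA: "finite FA" "finite FB" using fF unfolding FA_def FB_def by auto
  have cF: "card F = card FA + card FB" using FU FI fFA card_Un_disjoint by metis
  have cW: "card W + 1 = card A' + card B'"
    using card_Un_Int[OF fA] W cap by simp
  have vA: "v \<in> A'" "v \<in> B'" using cap by auto
  have inA: "\<forall>e\<in>FA. fst (ends e) \<in> A' \<and> snd (ends e) \<in> A'" unfolding FA_def by auto
  have inB: "\<forall>e\<in>FB. fst (ends e) \<in> B' \<and> snd (ends e) \<in> B'" unfolding FB_def by auto
  have inW: "\<forall>e\<in>F. fst (ends e) \<in> W \<and> snd (ends e) \<in> W" using sep W by auto
  have sep': "\<forall>e\<in>F. (fst (ends e) \<in> B' \<and> snd (ends e) \<in> B') \<or> (fst (ends e) \<in> A' \<and> snd (ends e) \<in> A')"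
    using sep by blast
  have cap': "B' \<inter> A' = {v}" using cap by blast
  have "is_tree W F ends \<longleftrightarrow> is_tree A' FA ends \<and> is_tree B' FB ends"
  proof
    assume T: "is_tree W F ends"
    then have conn: "\<forall>u\<in>W. \<forall>w\<in>W. (u, w) \<in> (edge_rel F ends)\<^sup>*" and cT: "card F + 1 = card W"
      unfolding is_tree_def by auto
    have connA: "\<forall>u\<in>A'. \<forall>w\<in>A'. (u, w) \<in> (edge_rel FA ends)\<^sup>*"
    proof (intro ballI)
      fix u w assume "u \<in> A'" "w \<in> A'"
      moreover then have "(u,w) \<in> (edge_rel F ends)\<^sup>*" using conn W by auto
      ultimately show "(u, w) \<in> (edge_rel FA ends)\<^sup>*"
        using proj_reach[OF cap sep, of u w] unfolding FA_def by auto
    qed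
    have connB: "\<forall>u\<in>B'. \<forall>w\<in>B'. (u, w) \<in> (edge_rel FB ends)\<^sup>*"
    proof (intro ballI)
      fix u w assume "u \<in> B'" "w \<in> B'"
      moreover then have "(u,w) \<in> (edge_rel F ends)\<^sup>*" using conn W by auto
      ultimately show "(u, w) \<in> (edge_rel FB ends)\<^sup>*"
        using proj_reach[OF cap' sep', of u w] unfolding FB_def by auto
    qed
    have "card A' \<le> card FA + 1" using connected_card[OF fFA(1) fA(1) inA connA] .
    moreover have "card B' \<le> card FB + 1" using connected_card[OF fFA(2) fA(2) inB connB] .
    ultimately have "card FA + 1 = card A'" "card FB + 1 = card B'" using cF cW cT by linarith+
    then show "is_tree A' FA ends \<and> is_tree B' FB ends"
      unfolding is_tree_def using fA fFA inA inB connA connB by auto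
  next
    assume "is_tree A' FA ends \<and> is_tree B' FB ends"
    then have connA: "\<forall>u\<in>A'. \<forall>w\<in>A'. (u, w) \<in> (edge_rel FA ends)\<^sup>*"
      and connB: "\<forall>u\<in>B'. \<forall>w\<in>B'. (u, w) \<in> (edge_rel FB ends)\<^sup>*"
      and c: "card FA + 1 = card A'" "card FB + 1 = card B'"
      unfolding is_tree_def by auto
    have tov: "(u, v) \<in> (edge_rel F ends)\<^sup>*" if "u \<in> W" for u
    proof (cases "u \<in> A'")
      case True
      then have "(u, v) \<in> (edge_rel FA ends)\<^sup>*" using connA vA by auto
      then show ?thesis using reach_mono[of FA F] FU by auto
    next
      case False
      then have "u \<in> B'" using that W by auto
      then have "(u, v) \<in> (edge_rel FB ends)\<^sup>*" using connB vA by auto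
      then show ?thesis using reach_mono[of FB F] FU by auto
    qed
    have conn: "\<forall>u\<in>W. \<forall>w\<in>W. (u, w) \<in> (edge_rel F ends)\<^sup>*"
    proof (intro ballI)
      fix u w assume "u \<in> W" "w \<in> W"
      then have "(u, v) \<in> (edge_rel F ends)\<^sup>*" "(v, w) \<in> (edge_rel F ends)\<^sup>*"
        using tov[of u] tov[of w] reach_sym[of w v F ends] by auto
      then show "(u, w) \<in> (edge_rel F ends)\<^sup>*" by (rule rtrancl_trans)
    qed
    show "is_tree W F ends"
      unfolding is_tree_def using fW fF inW conn c cF cW by auto
  qed
  then show ?thesis unfolding FA_def FB_def .
qed




lemma twoF_swap:
  assumes "(S,F) \<in> spanning_2forests W EE ends"
  shows "(W - S, F) \<in> spanning_2forests W EE ends \<and> S \<subseteq> W"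
proof -
  obtain F1 F2 where h: "S \<subseteq> W" "F \<subseteq> EE" "F = F1 \<union> F2" "is_tree S F1 ends" "is_tree (W - S) F2 ends"
    using assms unfolding spanning_2forests_def by auto
  have "W - (W - S) = S" using h(1) by auto
  then have "F = F2 \<union> F1 \<and> is_tree (W - S) F2 ends \<and> is_tree (W - (W - S)) F1 ends" using h by auto
  then show ?thesis unfolding spanning_2forests_def using h(1,2) by blast
qed

lemma finite_twoF:
  assumes "finite W" "finite EE"
  shows "finite (spanning_2forests W EE ends)"
proof -
  have "spanning_2forests W EE ends \<subseteq> Pow W \<times> Pow EE" unfolding spanning_2forests_def by auto
  then show ?thesis using assms finite_subset by blast
qed

lemma sum_half:
  fixes h :: "'v set \<times> 'e set \<Rightarrow> real"
  assumes fin: "finite W" "finite EE" and vW: "v \<in> W"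
    and sym: "\<And>S F. (S,F) \<in> spanning_2forests W EE ends \<Longrightarrow> h (W - S, F) = h (S, F)"
  shows "sum h (spanning_2forests W EE ends) = 2 * sum h {p \<in> spanning_2forests W EE ends. v \<in> fst p}"
proof -
  define P where "P = spanning_2forests W EE ends"
  define Q where "Q = {p \<in> P. v \<in> fst p}"
  define sw where "sw = (\<lambda>(S::'v set, F::'e set). (W - S, F))"
  have fP: "finite P" unfolding P_def using finite_twoF fin by blast
  have fQ: "finite Q" using fP unfolding Q_def by auto
  have PU: "P = Q \<union> sw ` Q"
  proof
    show "P \<subseteq> Q \<union> sw ` Q"
    proof
      fix p assume p: "p \<in> P"
      obtain S F where pSF: "p = (S,F)" by (cases p)
      show "p \<in> Q \<union> sw ` Q"
      proof (cases "v \<in> S")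
        case True then show ?thesis using p pSF unfolding Q_def by auto
      next
        case False
        have "(W - S, F) \<in> P" "S \<subseteq> W" using twoF_swap[of S F W EE ends] p pSF unfolding P_def by auto
        moreover have "W - (W - S) = S" using \<open>S \<subseteq> W\<close> by auto
        ultimately have "(W - S, F) \<in> Q" "sw (W - S, F) = p" using False vW pSF unfolding Q_def sw_def by auto
        then show ?thesis by (metis UnI2 image_eqI)
      qed
    qed
  next
    show "Q \<union> sw ` Q \<subseteq> P"
      using twoF_swap[of _ _ W EE ends] unfolding Q_def sw_def P_def by auto
  qed
  have disj: "Q \<inter> sw ` Q = {}" unfolding Q_def sw_def by auto
  have inj: "inj_on sw Q"
  proof (rule inj_onI)
    fix p q assume "p \<in> Q" "q \<in> Q" "sw p = sw q"
    moreover obtain S F where "p = (S,F)" by (cases p)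
    moreover obtain S' F' where "q = (S',F')" by (cases q)
    ultimately show "p = q"
      using twoF_swap[of _ _ W EE ends] unfolding Q_def sw_def P_def by (auto simp: Diff_eq)
  qed
  have "sum h (sw ` Q) = sum (h \<circ> sw) Q" using sum.reindex[OF inj] .
  also have "\<dots> = sum h Q"
  proof (rule sum.cong)
    fix p assume "p \<in> Q"
    moreover obtain S F where "p = (S,F)" by (cases p)
    ultimately show "(h \<circ> sw) p = h p" using sym unfolding Q_def P_def sw_def by auto
  qed simp
  finally have c: "sum h (sw ` Q) = sum h Q" .
  have "sum h P = sum h Q + sum h (sw ` Q)"
    unfolding PU by (rule sum.union_disjoint[OF fQ finite_imageI[OF fQ] disj])
  then have "sum h P = 2 * sum h Q" using c by simp
  then show ?thesis unfolding P_def Q_def .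
qed

lemma mink_sq_neg: "mink_sq (- x) = mink_sq x"
  unfolding mink_sq_def by simp

lemma mink_sq_zero: "mink_sq 0 = 0"
  unfolding mink_sq_def by simp

lemma phi_half:
  assumes fin: "finite W" "finite EE" and vW: "v \<in> W"
    and rs: "(\<Sum>u\<in>W. \<rho> u) = 0" and ml: "\<forall>e\<in>EE. m e = 0"
  shows "phi W EE ends \<alpha> m \<rho> =
    (\<Sum>p\<in>{p \<in> spanning_2forests W EE ends. v \<in> fst p}.
        mink_sq (\<Sum>u\<in>W - fst p. \<rho> u) * (\<Prod>e\<in>EE - snd p. \<alpha> e))"
proof -
  define h where "h = (\<lambda>(S, F). mink_sq (\<Sum>u\<in>S. \<rho> u) * (\<Prod>e\<in>EE - F. \<alpha> e))"
  have msym: "mink_sq (\<Sum>u\<in>W - S. \<rho> u) = mink_sq (\<Sum>u\<in>S. \<rho> u)" if "S \<subseteq> W" for S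
  proof -
    have "(\<Sum>u\<in>W - S. \<rho> u) = - (\<Sum>u\<in>S. \<rho> u)"
      using sum_diff[OF fin(1) that, of \<rho>] rs by simp
    then show ?thesis using mink_sq_neg by simp
  qed
  have "(\<Sum>e\<in>EE. \<alpha> e * (m e)\<^sup>2) = 0" using ml by simp
  then have "phi W EE ends \<alpha> m \<rho> = (1/2) * sum h (spanning_2forests W EE ends)"
    unfolding phi_def h_def by simp
  also have "\<dots> = sum h {p \<in> spanning_2forests W EE ends. v \<in> fst p}"
  proof -
    have "sum h (spanning_2forests W EE ends) = 2 * sum h {p \<in> spanning_2forests W EE ends. v \<in> fst p}"
    proof (rule sum_half[OF fin vW])
      fix S F assume "(S,F) \<in> spanning_2forests W EE ends"
      then have "S \<subseteq> W" using twoF_swap by blast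
      then have "W - (W - S) = S" by auto
      then show "h (W - S, F) = h (S, F)" unfolding h_def using msym[of "W - S"] by auto
    qed
    then show ?thesis by simp
  qed
  also have "\<dots> = (\<Sum>p\<in>{p \<in> spanning_2forests W EE ends. v \<in> fst p}.
        mink_sq (\<Sum>u\<in>W - fst p. \<rho> u) * (\<Prod>e\<in>EE - snd p. \<alpha> e))"
  proof (rule sum.cong)
    fix p assume "p \<in> {p \<in> spanning_2forests W EE ends. v \<in> fst p}"
    moreover obtain S F where "p = (S,F)" by (cases p)
    ultimately have "S \<subseteq> W" "p = (S,F)" using twoF_swap[of S F W EE ends] by auto
    then show "h p = mink_sq (\<Sum>u\<in>W - fst p. \<rho> u) * (\<Prod>e\<in>EE - snd p. \<alpha> e)"
      unfolding h_def using msym by simp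
  qed simp
  finally show ?thesis .
qed

lemma comp_side:
  assumes cap: "A \<inter> B = {v}"
    and sep: "\<forall>e\<in>E. (fst (ends e) \<in> A \<and> snd (ends e) \<in> A) \<or> (fst (ends e) \<in> B \<and> snd (ends e) \<in> B)"
    and T: "is_tree W F ends" and FE: "F \<subseteq> E" and vW: "v \<notin> W" and WAB: "W \<subseteq> A \<union> B"
  shows "W \<subseteq> A - {v} \<or> W \<subseteq> B - {v}"
proof (rule ccontr)
  assume "\<not> ?thesis"
  then obtain w1 w2 where w: "w1 \<in> W" "w1 \<notin> A - {v}" "w2 \<in> W" "w2 \<notin> B - {v}" by auto
  then have w1B: "w1 \<notin> A" and w2A: "w2 \<in> A" using vW WAB by auto
  have inW: "\<forall>e\<in>F. fst (ends e) \<in> W \<and> snd (ends e) \<in> W"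
    and conn: "\<forall>u\<in>W. \<forall>w\<in>W. (u, w) \<in> (edge_rel F ends)\<^sup>*" using T unfolding is_tree_def by auto
  have sepF: "\<forall>e\<in>F. (fst (ends e) \<in> A \<and> snd (ends e) \<in> A) \<or> (fst (ends e) \<in> B \<and> snd (ends e) \<in> B)"
    using sep FE by auto
  have "(w2, w1) \<in> (edge_rel F ends)\<^sup>*" using conn w by auto
  from proj_reach[OF cap sepF this]
  have r1: "(w2, v) \<in> (edge_rel {e\<in>F. fst (ends e) \<in> A \<and> snd (ends e) \<in> A} ends)\<^sup>*"
    using w1B w2A by simp
  have in1: "\<forall>e\<in>{e\<in>F. fst (ends e) \<in> A \<and> snd (ends e) \<in> A}. fst (ends e) \<in> W \<and> snd (ends e) \<in> W"
    using inW by auto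
  have "v \<in> W" by (rule reach_closed[OF in1 w(3) r1])
  then show False using vW by simp
qed




theorem mainTheorem9:
  fixes V :: "'v set" and E :: "'e set" and ends :: "'e \<Rightarrow> 'v \<times> 'v"
    and \<alpha> m :: "'e \<Rightarrow> real" and \<rho> :: "'v \<Rightarrow> real^4"
    and x1 x2 x3 x4 v :: 'v and A B :: "'v set"
  assumes G: "graph V E ends"
    and massless: "\<forall>e\<in>E. m e = 0"
    and X_sub: "{x1, x2, x3, x4} \<subseteq> V"
    and X_dist: "card {x1, x2, x3, x4} = 4"
    and rho_out: "\<forall>u\<in>V - {x1, x2, x3, x4}. \<rho> u = 0"
    and rho_sum: "(\<Sum>u\<in>V. \<rho> u) = 0"
    and onshell: "\<forall>x\<in>{x1, x2, x3, x4}. mink_sq (\<rho> x) = 0"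
    and sep_cover: "A \<union> B = V"
    and sep_cap: "A \<inter> B = {v}"
    and sep_noedge: "\<forall>e\<in>E. \<not> ((fst (ends e) \<in> A - B \<and> snd (ends e) \<in> B - A) \<or>
                              (fst (ends e) \<in> B - A \<and> snd (ends e) \<in> A - B))"
    and xA: "x1 \<in> A - {v}" "x2 \<in> A - {v}" "x3 \<in> A - {v}"
    and xB: "x4 \<in> B - {v}"
  shows "phi V E ends \<alpha> m \<rho> =
         phi A (edges_in E ends A) ends \<alpha> m (\<rho>(v := \<rho> x4)) * psi B (edges_in E ends B) ends \<alpha>"
proof -
  define EA where "EA = edges_in E ends A"
  define EB where "EB = edges_in E ends B"
  define \<rho>' where "\<rho>' = \<rho>(v := \<rho> x4)"
  have fV: "finite V" and fE: "finite E"
    and Eok: "\<forall>e\<in>E. fst (ends e) \<in> V \<and> snd (ends e) \<in> V \<and> fst (ends e) \<noteq> snd (ends e)"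
    using G unfolding graph_def by auto
  have loop: "\<forall>e\<in>E. fst (ends e) \<noteq> snd (ends e)" using Eok by auto
  have sep: "\<forall>e\<in>E. (fst (ends e) \<in> A \<and> snd (ends e) \<in> A) \<or> (fst (ends e) \<in> B \<and> snd (ends e) \<in> B)"
  proof
    fix e assume e: "e \<in> E"
    then have "fst (ends e) \<in> A \<union> B" "snd (ends e) \<in> A \<union> B" using Eok sep_cover by auto
    then show "(fst (ends e) \<in> A \<and> snd (ends e) \<in> A) \<or> (fst (ends e) \<in> B \<and> snd (ends e) \<in> B)"
      using sep_noedge e by blast
  qed
  have vAB: "v \<in> A" "v \<in> B" using sep_cap by auto
  have AV: "A \<subseteq> V" "B \<subseteq> V" using sep_cover by auto
  have fA: "finite A" "finite B" using AV fV finite_subset by auto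
  have EAB: "EA \<inter> EB = {}"
  proof (rule ccontr)
    assume "EA \<inter> EB \<noteq> {}"
    then obtain e where "e \<in> EA" "e \<in> EB" by auto
    then have "e \<in> E" "fst (ends e) = v" "snd (ends e) = v"
      using sep_cap unfolding EA_def EB_def edges_in_def by auto
    then show False using loop by auto
  qed
  have EU: "E = EA \<union> EB" using sep unfolding EA_def EB_def edges_in_def by auto
  have fEAB: "finite EA" "finite EB" using fE EU by auto
  have EAE: "EA \<subseteq> E" "EB \<subseteq> E" using EU by auto
  have xnB: "x1 \<notin> B" "x2 \<notin> B" "x3 \<notin> B" using xA sep_cap by auto
  have x4B: "x4 \<in> B" "x4 \<noteq> v" using xB by auto
  have rho0: "\<rho> u = 0" if "u \<in> B" "u \<noteq> x4" for u
    using rho_out that xnB AV by auto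
  have rhov: "\<rho> v = 0" using rho_out xA xB AV vAB by auto
  have sumB: "sum \<rho> U = (if x4 \<in> U then \<rho> x4 else 0)" if "U \<subseteq> B" for U
  proof -
    have fU: "finite U" using that fA finite_subset by auto
    have "sum \<rho> U = (\<Sum>u\<in>U. if u = x4 then \<rho> x4 else 0)"
      by (rule sum.cong) (use rho0 that in auto)
    also have "\<dots> = (if x4 \<in> U then \<rho> x4 else 0)" using sum.delta[OF fU, of x4 "\<lambda>_. \<rho> x4"] by simp
    finally show ?thesis .
  qed
  have sumA': "(\<Sum>u\<in>A. \<rho>' u) = 0"
  proof -
    have VU: "V = (A - {v}) \<union> B" "(A - {v}) \<inter> B = {}" using sep_cover sep_cap by auto
    have "sum \<rho> V = sum \<rho> (A - {v}) + sum \<rho> B"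
      using sum.union_disjoint[of "A - {v}" B \<rho>] fA VU by simp
    then have 1: "sum \<rho> (A - {v}) + \<rho> x4 = 0" using rho_sum sumB[of B] x4B by simp
    have "(\<Sum>u\<in>A. \<rho>' u) = \<rho>' v + (\<Sum>u\<in>A - {v}. \<rho>' u)" using sum.remove[OF fA(1) vAB(1)] by simp
    also have "(\<Sum>u\<in>A - {v}. \<rho>' u) = sum \<rho> (A - {v})" unfolding \<rho>'_def by (rule sum.cong) auto
    finally show ?thesis using 1 unfolding \<rho>'_def by (simp add: add.commute)
  qed
  define QV where "QV = {p \<in> spanning_2forests V E ends. v \<in> fst p}"
  define QA where "QA = {p \<in> spanning_2forests A EA ends. v \<in> fst p}"
  define STB where "STB = spanning_trees B EB ends"
  define Q2 where "Q2 = {p \<in> QV. V - fst p \<subseteq> A - {v}}"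
  define hV where "hV = (\<lambda>p. mink_sq (\<Sum>u\<in>V - fst p. \<rho> u) * (\<Prod>e\<in>E - snd p. \<alpha> e))"
  define hA where "hA = (\<lambda>p. mink_sq (\<Sum>u\<in>A - fst p. \<rho>' u) * (\<Prod>e\<in>EA - snd p. \<alpha> e))"
  define k where "k = (\<lambda>T. \<Prod>e\<in>EB - T. \<alpha> e)"
  define \<Phi> where "\<Phi> = (\<lambda>(p::'v set \<times> 'e set, T::'e set). (fst p \<union> B, snd p \<union> T))"
  have phiV: "phi V E ends \<alpha> m \<rho> = sum hV QV"
    unfolding QV_def hV_def using phi_half[OF fV fE _ rho_sum massless] vAB AV by blast
  have phiA: "phi A EA ends \<alpha> m \<rho>' = sum hA QA"
    unfolding QA_def hA_def using phi_half[OF fA(1) fEAB(1) vAB(1) sumA'] massless EAE by blast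
  have psiB: "psi B EB ends \<alpha> = sum k STB"
    unfolding psi_def k_def STB_def by simp
  have fQV: "finite QV" unfolding QV_def using finite_twoF[OF fV fE] by auto
  have step1: "sum hV QV = sum hV Q2"
  proof (rule sum.mono_neutral_right[OF fQV])
    show "Q2 \<subseteq> QV" unfolding Q2_def by auto
    show "\<forall>i\<in>QV - Q2. hV i = 0"
    proof
      fix p assume p: "p \<in> QV - Q2"
      obtain S F where pSF: "p = (S,F)" by (cases p)
      have SF: "(S,F) \<in> spanning_2forests V E ends" "v \<in> S" "\<not> V - S \<subseteq> A - {v}"
        using p unfolding pSF QV_def Q2_def by auto
      then obtain F1 F2 where h: "S \<subseteq> V" "F \<subseteq> E" "F = F1 \<union> F2" "is_tree S F1 ends" "is_tree (V - S) F2 ends"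
        unfolding spanning_2forests_def by auto
      have "V - S \<subseteq> A - {v} \<or> V - S \<subseteq> B - {v}"
        by (rule comp_side[OF sep_cap sep h(5)]) (use h SF sep_cover in auto)
      then have VSB: "V - S \<subseteq> B" using SF by auto
      have "mink_sq (\<Sum>u\<in>V - S. \<rho> u) = 0"
        using sumB[OF VSB] onshell mink_sq_zero by auto
      then show "hV p = 0" unfolding hV_def pSF by simp
    qed
  qed
  have img1: "\<Phi> ` (QA \<times> STB) \<subseteq> Q2"
  proof
    fix x assume "x \<in> \<Phi> ` (QA \<times> STB)"
    then obtain S F T where x: "x = (S \<union> B, F \<union> T)" and SF: "(S,F) \<in> spanning_2forests A EA ends" "v \<in> S"
      and T: "T \<in> STB"
      unfolding \<Phi>_def QA_def by force
    from SF obtain F1 F2 where h: "S \<subseteq> A" "F \<subseteq> EA" "F = F1 \<union> F2" "is_tree S F1 ends" "is_tree (A - S) F2 ends"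
      unfolding spanning_2forests_def by auto
    from T have TB: "T \<subseteq> EB" "is_tree B T ends" unfolding STB_def spanning_trees_def by auto
    have capS: "S \<inter> B = {v}" using h(1) SF(2) sep_cap by auto
    have F1in: "\<forall>e\<in>F1. fst (ends e) \<in> S \<and> snd (ends e) \<in> S" using h(4) unfolding is_tree_def by auto
    have Tin: "\<forall>e\<in>T. fst (ends e) \<in> B \<and> snd (ends e) \<in> B" using TB(1) unfolding EB_def edges_in_def by auto
    have F1E: "F1 \<subseteq> E" "T \<subseteq> E" using h(2,3) TB(1) EAE by auto
    have sepST: "\<forall>e\<in>F1 \<union> T. (fst (ends e) \<in> S \<and> snd (ends e) \<in> S) \<or> (fst (ends e) \<in> B \<and> snd (ends e) \<in> B)"
      using F1in Tin by blast
    have loopST: "\<forall>e\<in>F1 \<union> T. fst (ends e) \<noteq> snd (ends e)" using loop F1E by blast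
    have eq1: "{e\<in>F1 \<union> T. fst (ends e) \<in> S \<and> snd (ends e) \<in> S} = F1"
    proof -
      have "e \<in> F1" if "e \<in> T" "fst (ends e) \<in> S" "snd (ends e) \<in> S" for e
      proof -
        have "fst (ends e) = v" "snd (ends e) = v" using that Tin capS by auto
        moreover have "e \<in> F1 \<union> T" using that(1) by simp
        then have "fst (ends e) \<noteq> snd (ends e)" using loopST by (rule bspec[rotated])
        ultimately show ?thesis by simp
      qed
      then show ?thesis using F1in by blast
    qed
    have eq2: "{e\<in>F1 \<union> T. fst (ends e) \<in> B \<and> snd (ends e) \<in> B} = T"
    proof -
      have "e \<in> T" if "e \<in> F1" "fst (ends e) \<in> B" "snd (ends e) \<in> B" for e
      proof -
        have "fst (ends e) = v" "snd (ends e) = v" using that F1in capS by auto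
        moreover have "e \<in> F1 \<union> T" using that(1) by simp
        then have "fst (ends e) \<noteq> snd (ends e)" using loopST by (rule bspec[rotated])
        ultimately show ?thesis by simp
      qed
      then show ?thesis using Tin by blast
    qed
    have finST: "finite (S \<union> B)" "finite (F1 \<union> T)" using h(1) fA fE F1E finite_subset by auto
    have tr: "is_tree (S \<union> B) (F1 \<union> T) ends"
      using tree_split[OF refl capS finST sepST loopST] eq1 eq2 h(4) TB(2) by simp
    have VS: "V - (S \<union> B) = A - S" using sep_cover sep_cap SF(2) h(1) by auto
    have "F \<union> T = (F1 \<union> T) \<union> F2" using h(3) by auto
    moreover have "S \<union> B \<subseteq> V" "F \<union> T \<subseteq> E" using h(1,2) AV EAE TB(1) by auto
    ultimately have "(S \<union> B, F \<union> T) \<in> spanning_2forests V E ends"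
      unfolding spanning_2forests_def using tr h(5) VS by auto
    moreover have "v \<in> S \<union> B" "V - (S \<union> B) \<subseteq> A - {v}" using SF(2) VS by auto
    ultimately show "x \<in> Q2" unfolding x Q2_def QV_def by auto
  qed
  have img2: "Q2 \<subseteq> \<Phi> ` (QA \<times> STB)"
  proof
    fix x assume x: "x \<in> Q2"
    obtain S F where xSF: "x = (S,F)" by (cases x)
    from x have SF: "(S,F) \<in> spanning_2forests V E ends" "v \<in> S" "V - S \<subseteq> A - {v}"
      unfolding Q2_def QV_def xSF by auto
    then obtain F1 F2 where h: "S \<subseteq> V" "F \<subseteq> E" "F = F1 \<union> F2" "is_tree S F1 ends" "is_tree (V - S) F2 ends"
      unfolding spanning_2forests_def by auto
    have BS: "B \<subseteq> S" using SF(3) AV sep_cap by auto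
    define SA where "SA = S \<inter> A"
    have SU: "SA \<union> B = S" using BS h(1) sep_cover unfolding SA_def by auto
    have capS: "SA \<inter> B = {v}" using SF(2) sep_cap BS unfolding SA_def by auto
    have F1in: "\<forall>e\<in>F1. fst (ends e) \<in> S \<and> snd (ends e) \<in> S" using h(4) unfolding is_tree_def by auto
    have F1E: "F1 \<subseteq> E" "F2 \<subseteq> E" using h(2,3) by auto
    have sep1: "\<forall>e\<in>F1. (fst (ends e) \<in> SA \<and> snd (ends e) \<in> SA) \<or> (fst (ends e) \<in> B \<and> snd (ends e) \<in> B)"
      using sep F1in F1E unfolding SA_def by blast
    have loop1: "\<forall>e\<in>F1. fst (ends e) \<noteq> snd (ends e)" using loop F1E by blast
    have finS: "finite S" "finite F1" using finite_subset[OF h(1) fV] finite_subset[OF F1E(1) fE] by auto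
    define F1a where "F1a = {e\<in>F1. fst (ends e) \<in> SA \<and> snd (ends e) \<in> SA}"
    define F1b where "F1b = {e\<in>F1. fst (ends e) \<in> B \<and> snd (ends e) \<in> B}"
    have trs: "is_tree SA F1a ends" "is_tree B F1b ends"
      using tree_split[OF SU capS finS sep1 loop1] h(4) unfolding F1a_def F1b_def by auto
    have F1U: "F1 = F1a \<union> F1b" using sep1 unfolding F1a_def F1b_def by auto
    have F2in: "\<forall>e\<in>F2. fst (ends e) \<in> V - S \<and> snd (ends e) \<in> V - S" using h(5) unfolding is_tree_def by auto
    have AS: "A - SA = V - S" using SF(3) AV unfolding SA_def by auto
    have sub: "F1a \<union> F2 \<subseteq> EA"
      using F1E F2in SF(3) unfolding F1a_def EA_def edges_in_def SA_def by auto
    have SAA: "SA \<subseteq> A" "v \<in> SA" using SF(2) vAB unfolding SA_def by auto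
    have tA2: "is_tree (A - SA) F2 ends" using h(5) AS by simp
    have ex: "\<exists>G1 G2. F1a \<union> F2 = G1 \<union> G2 \<and> is_tree SA G1 ends \<and> is_tree (A - SA) G2 ends"
      by (intro exI[of _ F1a] exI[of _ F2]) (simp add: trs(1) tA2)
    have mem1: "(SA, F1a \<union> F2) \<in> QA" unfolding QA_def spanning_2forests_def
      using sub SAA ex by simp
    have "F1b \<subseteq> EB" using F1E unfolding F1b_def EB_def edges_in_def by auto
    then have mem2: "F1b \<in> STB" using trs unfolding STB_def spanning_trees_def by auto
    have "\<Phi> ((SA, F1a \<union> F2), F1b) = x" unfolding \<Phi>_def xSF using SU h(3) F1U by auto
    then show "x \<in> \<Phi> ` (QA \<times> STB)" using mem1 mem2 by force
  qed
  have inj: "inj_on \<Phi> (QA \<times> STB)"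
  proof (rule inj_onI)
    fix x y assume xm: "x \<in> QA \<times> STB" and ym: "y \<in> QA \<times> STB" and eq: "\<Phi> x = \<Phi> y"
    obtain S F T where xs: "x = ((S,F),T)" by (metis prod.collapse)
    obtain S' F' T' where ys: "y = ((S',F'),T')" by (metis prod.collapse)
    have p1: "S \<subseteq> A" "v \<in> S" "F \<subseteq> EA" "T \<subseteq> EB"
      using xm unfolding xs QA_def STB_def spanning_2forests_def spanning_trees_def by auto
    have p2: "S' \<subseteq> A" "v \<in> S'" "F' \<subseteq> EA" "T' \<subseteq> EB"
      using ym unfolding ys QA_def STB_def spanning_2forests_def spanning_trees_def by auto
    have e1: "S \<union> B = S' \<union> B" "F \<union> T = F' \<union> T'" using eq unfolding \<Phi>_def xs ys by auto
    have "S = (S \<union> B) \<inter> A" using p1 sep_cap by auto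
    also have "\<dots> = (S' \<union> B) \<inter> A" using e1 by simp
    also have "\<dots> = S'" using p2 sep_cap by auto
    finally have "S = S'" .
    have "F = (F \<union> T) \<inter> EA" using p1 EAB by auto
    also have "\<dots> = (F' \<union> T') \<inter> EA" using e1 by simp
    also have "\<dots> = F'" using p2 EAB by auto
    finally have "F = F'" .
    have "T = (F \<union> T) \<inter> EB" using p1 EAB by auto
    also have "\<dots> = (F' \<union> T') \<inter> EB" using e1 by simp
    also have "\<dots> = T'" using p2 EAB by auto
    finally have "T = T'" .
    show "x = y" using xs ys \<open>S = S'\<close> \<open>F = F'\<close> \<open>T = T'\<close> by simp
  qed
  have imgeq: "\<Phi> ` (QA \<times> STB) = Q2" using img1 img2 by auto
  have wt: "(hV \<circ> \<Phi>) x = (\<lambda>(a, b). hA a * k b) x" if xm: "x \<in> QA \<times> STB" for x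
  proof -
    obtain S F T where xs: "x = ((S,F),T)" by (metis prod.collapse)
    have p1: "S \<subseteq> A" "v \<in> S" "F \<subseteq> EA" "T \<subseteq> EB"
      using xm unfolding xs QA_def STB_def spanning_2forests_def spanning_trees_def by auto
    have VS: "V - (S \<union> B) = A - S" using sep_cover sep_cap p1 by auto
    have s1: "(\<Sum>u\<in>A - S. \<rho> u) = (\<Sum>u\<in>A - S. \<rho>' u)"
      unfolding \<rho>'_def by (rule sum.cong) (use p1 in auto)
    have ED: "E - (F \<union> T) = (EA - F) \<union> (EB - T)" "(EA - F) \<inter> (EB - T) = {}"
      using EU EAB p1 by auto
    have "(\<Prod>e\<in>E - (F \<union> T). \<alpha> e) = (\<Prod>e\<in>EA - F. \<alpha> e) * (\<Prod>e\<in>EB - T. \<alpha> e)"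
      unfolding ED(1) by (rule prod.union_disjoint) (use fEAB ED(2) in auto)
    then show ?thesis unfolding xs \<Phi>_def hV_def hA_def k_def using VS s1 by simp
  qed
  have "sum hV Q2 = sum (hV \<circ> \<Phi>) (QA \<times> STB)"
    using sum.reindex[OF inj, of hV] imgeq by simp
  also have "\<dots> = (\<Sum>(a, b)\<in>QA \<times> STB. hA a * k b)"
    by (rule sum.cong) (use wt in auto)
  also have "\<dots> = sum hA QA * sum k STB"
    by (simp add: sum_product sum.cartesian_product)
  finally have "phi V E ends \<alpha> m \<rho> = phi A EA ends \<alpha> m \<rho>' * psi B EB ends \<alpha>"
    using phiV step1 phiA psiB by simp
  then show ?thesis unfolding EA_def EB_def \<rho>'_def .
qed


end
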